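(* Let $f:\mathbb{R}^{d-1}\to\mathbb{R}\cup\{+\infty\}$ be a convex function which is finite and $\mathcal{C}^2$ in a neighborhood of $0$, with $f(0)=0$, $Df(0)=0$ and $D^2f(0)=2\,\mathrm{Id}$ (so $f(x')=\|x'\|^2+o(\|x'\|^2)$ as $x'\to0$). Then for every $\varepsilon>0$ there exists $r>0$ such that $f(x')\ge\tilde f(x')$ for all $x'\in\mathbb{R}^{d-1}$, where $\tilde f(x')=(1-\varepsilon)\|x'\|^2$ if $\|x'\|\le r$, and $\tilde f(x')=(1-\varepsilon)\,r\,(2\|x'\|-r)$ if $\|x'\|\ge r$.
   Context: In the paper, $f$ is the function such that a convex domain $D\subset\mathbb{R}^d$ is given (after an affine change of coordinates placing a boundary point at the origin with tangent hyperplane $\{x_1=0\}$) by $\{(x_1,x'):x_1+f(x')<0\}$, $x'=(x_2,\dots,x_d)$; $\|\cdot\|$ is the Euclidean norm. *)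

theory Defs
  imports "HOL-Analysis.Analysis"
begin

text \<open>Convexity of an extended-real-valued function with values in \<open>\<real> \<union> {+\<infinity>}\<close>
  (the value \<open>-\<infinity>\<close> is excluded separately). Note \<open>0 * \<infinity> = 0\<close> in \<open>ereal\<close>.\<close>
definition ereal_convex :: "('a::real_vector \<Rightarrow> ereal) \<Rightarrow> bool" where
  "ereal_convex f \<longleftrightarrow>
     (\<forall>x y. \<forall>t::real. 0 \<le> t \<and> t \<le> 1 \<longrightarrow>
        f ((1 - t) *\<^sub>R x + t *\<^sub>R y) \<le> ereal (1 - t) * f x + ereal t * f y)"

definition ftilde :: "real \<Rightarrow> real \<Rightarrow> 'a::real_normed_vector \<Rightarrow> real" where
  "ftilde \<epsilon> r x = (if norm x \<le> r then (1 - \<epsilon>) * (norm x)\<^sup>2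
                    else (1 - \<epsilon>) * r * (2 * norm x - r))"

end

theory Submission
  imports Defs
begin

lemma line_deriv:
  fixes F :: "'a::real_normed_vector \<Rightarrow> real"
  assumes D: "(F has_derivative L) (at (y + t *\<^sub>R v))"
  shows "((\<lambda>s. F (y + s *\<^sub>R v)) has_real_derivative L v) (at t)"
proof -
  have bl: "bounded_linear L" using D has_derivative_bounded_linear by blast
  have l: "((\<lambda>s. y + s *\<^sub>R v) has_derivative (\<lambda>s. s *\<^sub>R v)) (at t)"
    by (auto intro!: derivative_eq_intros)
  have "((F \<circ> (\<lambda>s. y + s *\<^sub>R v)) has_derivative (L \<circ> (\<lambda>s. s *\<^sub>R v))) (at t)"
    using diff_chain_at[OF l D] .
  then have "((\<lambda>s. F (y + s *\<^sub>R v)) has_derivative (\<lambda>s. L (s *\<^sub>R v))) (at t)"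
    by (simp add: o_def)
  then show ?thesis
    by (rule has_derivative_imp_has_field_derivative[where D'="L v"])
       (simp add: linear_simps bl o_def)
qed

lemma tangent:
  fixes f :: "'a::real_normed_vector \<Rightarrow> ereal"
  assumes conv: "ereal_convex f"
    and no_minf: "\<forall>x. f x \<noteq> -\<infinity>"
    and fy: "f y \<noteq> \<infinity>"
    and D: "((\<lambda>z. real_of_ereal (f z)) has_derivative L) (at y)"
  shows "f x \<ge> ereal (real_of_ereal (f y) + L (x - y))"
proof (cases "f x = \<infinity>")
  case True then show ?thesis by simp
next
  case False
  define F where "F = (\<lambda>z. real_of_ereal (f z))"
  define a where "a = F x"
  define b where "b = F y"
  have fxa: "f x = ereal a" using False no_minf[rule_format, of x] unfolding a_def F_def
    by (cases "f x") auto
  have fyb: "f y = ereal b" using fy no_minf[rule_format, of y] unfolding b_def F_def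
    by (cases "f y") auto
  have bl: "bounded_linear L" using D has_derivative_bounded_linear by blast
  have ineq: "(F (y + t *\<^sub>R (x - y)) - b) / (t - 0) \<le> a - b" if t: "t \<in> {0<..1}" for t
  proof -
    have "y + t *\<^sub>R (x - y) = (1 - t) *\<^sub>R y + t *\<^sub>R x" by (simp add: algebra_simps)
    moreover have "f ((1 - t) *\<^sub>R y + t *\<^sub>R x) \<le> ereal (1 - t) * f y + ereal t * f x"
      using conv t unfolding ereal_convex_def by simp
    ultimately have "f (y + t *\<^sub>R (x - y)) \<le> ereal (1 - t) * f y + ereal t * f x"
      by simp
    also have "\<dots> = ereal ((1 - t) * b + t * a)" by (simp add: fxa fyb)
    finally have le: "f (y + t *\<^sub>R (x - y)) \<le> ereal ((1 - t) * b + t * a)" .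
    hence "F (y + t *\<^sub>R (x - y)) \<le> (1 - t) * b + t * a"
      unfolding F_def using no_minf[rule_format, of "y + t *\<^sub>R (x - y)"]
      by (cases "f (y + t *\<^sub>R (x - y))") simp_all
    hence "F (y + t *\<^sub>R (x - y)) - b \<le> t * (a - b)" by (simp add: algebra_simps)
    thus ?thesis using t by (simp add: divide_le_eq mult.commute)
  qed
  have "((\<lambda>s. F (y + s *\<^sub>R (x - y))) has_real_derivative L (x - y)) (at 0)"
    using line_deriv[of F L y 0 "x - y"] D unfolding F_def by simp
  hence "((\<lambda>s. F (y + s *\<^sub>R (x - y))) has_real_derivative L (x - y)) (at 0 within {0<..})"
    by (rule has_field_derivative_at_within)
  hence lim: "((\<lambda>s. (F (y + s *\<^sub>R (x - y)) - b) / (s - 0)) \<longlongrightarrow> L (x - y)) (at_right 0)"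
    unfolding has_field_derivative_iff b_def by simp
  have ev: "eventually (\<lambda>s. (F (y + s *\<^sub>R (x - y)) - b) / (s - 0) \<le> a - b) (at_right (0::real))"
    unfolding eventually_at_right_field
  proof (rule exI[of _ 1], intro conjI allI impI)
    fix s :: real assume "0 < s" "s < 1"
    then show "(F (y + s *\<^sub>R (x - y)) - b) / (s - 0) \<le> a - b" by (intro ineq) auto
  qed simp
  have "L (x - y) \<le> a - b"
    by (rule tendsto_upperbound[OF lim ev]) simp
  thus ?thesis using fxa fyb b_def by simp
qed


theorem lemma1:
  fixes f :: "'a::euclidean_space \<Rightarrow> ereal"
    and U :: "'a set"
    and Df :: "'a \<Rightarrow> ('a \<Rightarrow>\<^sub>L real)"
    and D2f :: "'a \<Rightarrow> ('a \<Rightarrow>\<^sub>L ('a \<Rightarrow>\<^sub>L real))"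
    and \<epsilon> :: real
  assumes conv: "ereal_convex f"
    and no_minf: "\<forall>x. f x \<noteq> -\<infinity>"
    and U_open: "open U" and U0: "0 \<in> U"
    and finite_U: "\<forall>x\<in>U. f x \<noteq> \<infinity>"
    and D1: "\<forall>x\<in>U. ((\<lambda>y. real_of_ereal (f y)) has_derivative blinfun_apply (Df x)) (at x)"
    and D2: "\<forall>x\<in>U. (Df has_derivative blinfun_apply (D2f x)) (at x)"
    and D2_cont: "continuous_on U D2f"
    and f0: "f 0 = 0"
    and Df0: "Df 0 = 0"
    and D2f0: "\<forall>h k. blinfun_apply (blinfun_apply (D2f 0) h) k = 2 * (h \<bullet> k)"
    and eps: "\<epsilon> > 0"
  shows "\<exists>r>0. \<forall>x. f x \<ge> ereal (ftilde \<epsilon> r x)"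
proof -
  define F where "F = (\<lambda>z. real_of_ereal (f z))"
  obtain d0 where d0: "d0 > 0" "ball 0 d0 \<subseteq> U"
    using U_open U0 open_contains_ball by blast
  have "(Df has_derivative blinfun_apply (D2f 0)) (at 0)" using D2 U0 by blast
  then obtain d1 where d1: "d1 > 0"
    "\<forall>y. norm (y - 0) < d1 \<longrightarrow> norm (Df y - Df 0 - blinfun_apply (D2f 0) (y - 0)) \<le> (2 * \<epsilon>) * norm (y - 0)"
    unfolding has_derivative_at_alt using eps by (meson mult_pos_pos zero_less_numeral)
  define r0 where "r0 = min d0 d1"
  have r0: "r0 > 0" using d0 d1 unfolding r0_def by simp
  have inU: "y \<in> U" if "norm y < r0" for y
    using that d0 unfolding r0_def by auto
  have fin: "f y = ereal (F y)" if "norm y < r0" for y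
    using inU[OF that] finite_U no_minf[rule_format, of y] unfolding F_def
    by (cases "f y") auto
  have K: "Df y y \<ge> 2 * (1 - \<epsilon>) * (norm y)\<^sup>2" if "norm y < r0" for y
  proof -
    have n: "norm (Df y - D2f 0 y) \<le> 2 * \<epsilon> * norm y"
      using d1(2)[rule_format, of y] that Df0 unfolding r0_def by simp
    have "\<bar>(Df y - D2f 0 y) y\<bar> \<le> norm (Df y - D2f 0 y) * norm y"
      using norm_blinfun[of "Df y - D2f 0 y" y] by simp
    also have "\<dots> \<le> 2 * \<epsilon> * norm y * norm y"
      by (rule mult_right_mono[OF n]) simp
    finally have a: "\<bar>Df y y - D2f 0 y y\<bar> \<le> 2 * \<epsilon> * (norm y)\<^sup>2"
      by (simp add: blinfun.diff_left power2_eq_square)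
    have b: "D2f 0 y y = 2 * (norm y)\<^sup>2" using D2f0 by (simp add: power2_norm_eq_inner)
    show ?thesis using a b by (simp add: algebra_simps abs_le_iff)
  qed
  have LB: "F y \<ge> (1 - \<epsilon>) * (norm y)\<^sup>2" if y: "norm y < r0" for y
  proof -
    define h where "h = (\<lambda>t. F (0 + t *\<^sub>R y) - (1 - \<epsilon>) * t\<^sup>2 * (norm y)\<^sup>2)"
    have der: "(h has_real_derivative (Df (0 + t *\<^sub>R y) y - (1 - \<epsilon>) * (2 * t) * (norm y)\<^sup>2)) (at t)"
      if t: "0 \<le> t" "t \<le> 1" for t
    proof -
      have "norm (t *\<^sub>R y) < r0" using t y
        by (simp add: mult_le_less_imp_less) (smt (verit) mult_left_le_one_le norm_ge_zero)
      then have "(F has_derivative Df (0 + t *\<^sub>R y)) (at (0 + t *\<^sub>R y))"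
        using D1 inU unfolding F_def by simp
      from line_deriv[OF this]
      show ?thesis unfolding h_def
        by (auto intro!: derivative_eq_intros)
    qed
    obtain z where z: "0 < z" "z < 1"
      "h 1 - h 0 = (1 - 0) * (Df (0 + z *\<^sub>R y) y - (1 - \<epsilon>) * (2 * z) * (norm y)\<^sup>2)"
      using MVT2[of 0 1 h, OF _ der] by auto
    have nz: "norm (z *\<^sub>R y) < r0" using z y
      by simp (smt (verit) mult_left_le_one_le norm_ge_zero)
    have "Df (z *\<^sub>R y) (z *\<^sub>R y) \<ge> 2 * (1 - \<epsilon>) * (norm (z *\<^sub>R y))\<^sup>2"
      by (rule K[OF nz])
    hence "z * Df (z *\<^sub>R y) y \<ge> z * (2 * (1 - \<epsilon>) * z * (norm y)\<^sup>2)"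
      using z by (simp add: blinfun.scaleR_right power2_eq_square algebra_simps)
    hence "Df (z *\<^sub>R y) y \<ge> 2 * (1 - \<epsilon>) * z * (norm y)\<^sup>2"
      using z by (simp add: mult_le_cancel_left_pos)
    hence "h 1 - h 0 \<ge> 0" using z(3) by (simp add: algebra_simps)
    moreover have "h 0 = 0" unfolding h_def F_def using f0 by simp
    ultimately show ?thesis unfolding h_def by simp
  qed
  define r where "r = r0 / 2"
  have r: "r > 0" "r < r0" using r0 unfolding r_def by auto
  show ?thesis
  proof (rule exI[of _ r], intro conjI allI)
    show "r > 0" by (rule r(1))
  next
    fix x :: 'a
    show "f x \<ge> ereal (ftilde \<epsilon> r x)"
    proof (cases "norm x \<le> r")
      case True
      then have "norm x < r0" using r by simp
      then show ?thesis using LB fin True unfolding ftilde_def by simp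
    next
      case False
      define s where "s = norm x"
      have s: "s > r" using False s_def by simp
      define y where "y = (r / s) *\<^sub>R x"
      have ny: "norm y = r" using s r s_def unfolding y_def by (auto simp: abs_of_pos)
      hence ny0: "norm y < r0" using r by simp
      have xy: "x - y = (s / r - 1) *\<^sub>R y"
        unfolding y_def using s r by (simp add: algebra_simps)
      have tan: "f x \<ge> ereal (F y + Df y (x - y))"
        using tangent[OF conv no_minf, of y "Df y" x] D1 inU[OF ny0] finite_U
        unfolding F_def by blast
      have "Df y (x - y) = (s / r - 1) * Df y y" unfolding xy by (simp add: blinfun.scaleR_right)
      also have "\<dots> \<ge> (s / r - 1) * (2 * (1 - \<epsilon>) * r\<^sup>2)"
        using K[OF ny0] ny s r by (intro mult_left_mono) auto
      finally have "F y + Df y (x - y) \<ge> (1 - \<epsilon>) * r\<^sup>2 + (s / r - 1) * (2 * (1 - \<epsilon>) * r\<^sup>2)"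
        using LB[OF ny0] ny by simp
      also have "(1 - \<epsilon>) * r\<^sup>2 + (s / r - 1) * (2 * (1 - \<epsilon>) * r\<^sup>2) = ftilde \<epsilon> r x"
        unfolding ftilde_def using False r s_def by (simp add: power2_eq_square field_simps)
      finally show ?thesis using tan order_trans ereal_less_eq(3) by blast
    qed
  qed
qed

end
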